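(* Let $G$ be a finitely generated left-orderable group and $H$ a finite index subgroup of $G$ such that $H$ is Hucha with respect to a family $\mathcal{H}$ of subgroups of $H$. Then $G$ is Hucha with respect to $\mathcal{H}$.
   Context: A positive cone of $G$ is a subsemigroup $P$ with $G=P\sqcup P^{-1}\sqcup\{1\}$; $G$ is left-orderable if it has one. With a finite symmetric generating set $X$ and word metric $d_X$, an $r$-path is a sequence $g_0,\dots,g_n$ with $d_X(g_i,g_{i+1})\le r$. A set $S$ $r$-disconnects subsets $H_1,H_2$ if every $r$-path starting in $H_1$ and ending in $H_2$ meets $S$; $S$ $r$-disconnects $P$ if there are $u,v\in P$ with $S$ $r$-disconnecting $\{u\},\{v\}$. A negative swamp of width $r$ for a subgroup $K$ (with respect to a positive cone $P$) is $S\subseteq P^{-1}$ that $r$-disconnects $P$ and $r$-disconnects $g_1K$ and $g_2K$ for some $g_1,g_2\in G$. A finitely generated left-orderable group $G$ is Hucha with respect to a family $\mathcal{H}$ of subgroups if for some finite generating set $X$ (equivalently, any), for every positive cone $P$, every $K\in\mathcal{H}$ and every $r>0$ there is a negative swamp of width $r$ for $K$ in $\Gamma(G,X)$. *)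

theory Defs
  imports Complex_Main "HOL-Algebra.Algebra"
begin

definition fin_gen :: "('a, 'b) monoid_scheme \<Rightarrow> bool" where
  "fin_gen G \<longleftrightarrow> (\<exists>Y. finite Y \<and> Y \<subseteq> carrier G \<and> generate G Y = carrier G)"

definition sym_gen_set :: "('a, 'b) monoid_scheme \<Rightarrow> 'a set \<Rightarrow> bool" where
  "sym_gen_set G Y \<longleftrightarrow> finite Y \<and> Y \<subseteq> carrier G \<and> (\<forall>x\<in>Y. inv\<^bsub>G\<^esub> x \<in> Y)
     \<and> generate G Y = carrier G"

definition positive_cone :: "('a, 'b) monoid_scheme \<Rightarrow> 'a set \<Rightarrow> bool" where
  "positive_cone G P \<longleftrightarrow> P \<subseteq> carrier G
     \<and> (\<forall>x\<in>P. \<forall>y\<in>P. x \<otimes>\<^bsub>G\<^esub> y \<in> P)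
     \<and> carrier G = P \<union> (\<lambda>x. inv\<^bsub>G\<^esub> x) ` P \<union> {\<one>\<^bsub>G\<^esub>}
     \<and> P \<inter> (\<lambda>x. inv\<^bsub>G\<^esub> x) ` P = {}
     \<and> \<one>\<^bsub>G\<^esub> \<notin> P \<and> \<one>\<^bsub>G\<^esub> \<notin> (\<lambda>x. inv\<^bsub>G\<^esub> x) ` P"

definition left_orderable :: "('a, 'b) monoid_scheme \<Rightarrow> bool" where
  "left_orderable G \<longleftrightarrow> (\<exists>P. positive_cone G P)"

text \<open>Word metric d_X(g,h) = length of a shortest word in Y representing g^-1 h
  (the path metric of the Cayley graph with edges g -- g x).\<close>
definition word_dist :: "('a, 'b) monoid_scheme \<Rightarrow> 'a set \<Rightarrow> 'a \<Rightarrow> 'a \<Rightarrow> nat" where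
  "word_dist G Y g h = (LEAST n. \<exists>xs. length xs = n \<and> set xs \<subseteq> Y
      \<and> foldr (\<lambda>x y. x \<otimes>\<^bsub>G\<^esub> y) xs \<one>\<^bsub>G\<^esub> = inv\<^bsub>G\<^esub> g \<otimes>\<^bsub>G\<^esub> h)"

definition r_path :: "('a, 'b) monoid_scheme \<Rightarrow> 'a set \<Rightarrow> real \<Rightarrow> 'a list \<Rightarrow> bool" where
  "r_path G Y r ps \<longleftrightarrow> ps \<noteq> [] \<and> set ps \<subseteq> carrier G
     \<and> (\<forall>i. Suc i < length ps \<longrightarrow> real (word_dist G Y (ps ! i) (ps ! Suc i)) \<le> r)"

definition r_disconnects :: "('a, 'b) monoid_scheme \<Rightarrow> 'a set \<Rightarrow> real \<Rightarrow> 'a set \<Rightarrow> 'a set \<Rightarrow> 'a set \<Rightarrow> bool" where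
  "r_disconnects G Y r S A B \<longleftrightarrow>
     (\<forall>ps. r_path G Y r ps \<and> hd ps \<in> A \<and> last ps \<in> B \<longrightarrow> set ps \<inter> S \<noteq> {})"

definition r_disconnects_set :: "('a, 'b) monoid_scheme \<Rightarrow> 'a set \<Rightarrow> real \<Rightarrow> 'a set \<Rightarrow> 'a set \<Rightarrow> bool" where
  "r_disconnects_set G Y r S P \<longleftrightarrow> (\<exists>u\<in>P. \<exists>v\<in>P. r_disconnects G Y r S {u} {v})"

definition negative_swamp :: "('a, 'b) monoid_scheme \<Rightarrow> 'a set \<Rightarrow> 'a set \<Rightarrow> 'a set \<Rightarrow> real \<Rightarrow> 'a set \<Rightarrow> bool" where
  "negative_swamp G Y P K r S \<longleftrightarrow>
     S \<subseteq> (\<lambda>x. inv\<^bsub>G\<^esub> x) ` P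
     \<and> r_disconnects_set G Y r S P
     \<and> (\<exists>g1\<in>carrier G. \<exists>g2\<in>carrier G.
          r_disconnects G Y r S (g1 <#\<^bsub>G\<^esub> K) (g2 <#\<^bsub>G\<^esub> K))"

definition Hucha :: "('a, 'b) monoid_scheme \<Rightarrow> 'a set set \<Rightarrow> bool" where
  "Hucha G \<H> \<longleftrightarrow> group G \<and> fin_gen G \<and> left_orderable G \<and>
     (\<exists>Y. sym_gen_set G Y \<and>
        (\<forall>P. positive_cone G P \<longrightarrow> (\<forall>K\<in>\<H>. \<forall>r::real. r > 0 \<longrightarrow>
            (\<exists>S. negative_swamp G Y P K r S))))"

end

theory Submission
  imports Defs
begin

definition wprod :: "('a, 'b) monoid_scheme \<Rightarrow> 'a list \<Rightarrow> 'a" where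
  "wprod G xs = foldr (\<lambda>x y. x \<otimes>\<^bsub>G\<^esub> y) xs \<one>\<^bsub>G\<^esub>"

definition wlen :: "('a, 'b) monoid_scheme \<Rightarrow> 'a set \<Rightarrow> 'a \<Rightarrow> nat" where
  "wlen G Y e = (LEAST n. \<exists>xs. length xs = n \<and> set xs \<subseteq> Y \<and> wprod G xs = e)"

lemma word_dist_wlen: "word_dist G Y g h = wlen G Y (inv\<^bsub>G\<^esub> g \<otimes>\<^bsub>G\<^esub> h)"
  unfolding word_dist_def wlen_def wprod_def by simp

lemma (in monoid) wprod_append:
  "set xs \<subseteq> carrier G \<Longrightarrow> set ys \<subseteq> carrier G \<Longrightarrow> wprod G (xs @ ys) = wprod G xs \<otimes> wprod G ys"
proof (induction xs)
  case Nil
  have "wprod G ys \<in> carrier G" using Nil.prems(2) unfolding wprod_def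
    by (induction ys) auto
  then show ?case by (simp add: wprod_def)
next
  case (Cons a xs)
  have "wprod G ys \<in> carrier G" using Cons.prems(2) unfolding wprod_def
    by (induction ys) auto
  moreover have "wprod G xs \<in> carrier G" using Cons.prems(1) unfolding wprod_def
    by (induction xs) auto
  ultimately show ?case using Cons by (simp add: wprod_def m_assoc)
qed

lemma (in group) word_exists:
  assumes "sym_gen_set G Y" "e \<in> carrier G"
  shows "\<exists>xs. set xs \<subseteq> Y \<and> wprod G xs = e"
proof -
  have Y: "Y \<subseteq> carrier G" "\<forall>x\<in>Y. inv x \<in> Y" "generate G Y = carrier G"
    using assms(1) unfolding sym_gen_set_def by auto
  have "e \<in> generate G Y" using Y assms(2) by simp
  then show ?thesis
  proof (induction rule: generate.induct)
    case one
    then show ?case by (intro exI[of _ "[]"]) (simp add: wprod_def)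
  next
    case (incl h)
    then show ?case using Y by (intro exI[of _ "[h]"]) (auto simp add: wprod_def)
  next
    case (inv h)
    then show ?case using Y by (intro exI[of _ "[inv h]"]) (auto simp add: wprod_def)
  next
    case (eng h1 h2)
    then obtain xs ys where "set xs \<subseteq> Y" "wprod G xs = h1" "set ys \<subseteq> Y" "wprod G ys = h2" by blast
    then show ?case using Y by (intro exI[of _ "xs @ ys"]) (auto simp add: wprod_append)
  qed
qed

lemma (in group) wlen_word:
  assumes "sym_gen_set G Y" "e \<in> carrier G"
  shows "\<exists>xs. length xs = wlen G Y e \<and> set xs \<subseteq> Y \<and> wprod G xs = e"
proof -
  obtain xs where "set xs \<subseteq> Y \<and> wprod G xs = e" using word_exists[OF assms] by blast
  then have "\<exists>n xs. length xs = n \<and> set xs \<subseteq> Y \<and> wprod G xs = e" by blast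
  then show ?thesis unfolding wlen_def by (rule LeastI_ex)
qed

lemma wlen_le:
  assumes "set xs \<subseteq> Y" "wprod G xs = e"
  shows "wlen G Y e \<le> length xs"
  unfolding wlen_def using assms by (intro Least_le) blast


lemma cone_D:
  assumes "positive_cone G P"
  shows "P \<subseteq> carrier G \<and> (\<forall>x\<in>P. \<forall>y\<in>P. x \<otimes>\<^bsub>G\<^esub> y \<in> P)
     \<and> carrier G = P \<union> (\<lambda>x. inv\<^bsub>G\<^esub> x) ` P \<union> {\<one>\<^bsub>G\<^esub>}
     \<and> P \<inter> (\<lambda>x. inv\<^bsub>G\<^esub> x) ` P = {}
     \<and> \<one>\<^bsub>G\<^esub> \<notin> P \<and> \<one>\<^bsub>G\<^esub> \<notin> (\<lambda>x. inv\<^bsub>G\<^esub> x) ` P"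
  using assms unfolding positive_cone_def .

lemma cone_D1: "positive_cone G P \<Longrightarrow> P \<subseteq> carrier G" using cone_D by blast
lemma cone_D2: "positive_cone G P \<Longrightarrow> x \<in> P \<Longrightarrow> y \<in> P \<Longrightarrow> x \<otimes>\<^bsub>G\<^esub> y \<in> P" using cone_D by blast
lemma cone_D3: "positive_cone G P \<Longrightarrow> carrier G = P \<union> (\<lambda>x. inv\<^bsub>G\<^esub> x) ` P \<union> {\<one>\<^bsub>G\<^esub>}" using cone_D by blast
lemma cone_D4: "positive_cone G P \<Longrightarrow> P \<inter> (\<lambda>x. inv\<^bsub>G\<^esub> x) ` P = {}" using cone_D by blast
lemma cone_D5: "positive_cone G P \<Longrightarrow> \<one>\<^bsub>G\<^esub> \<notin> P" using cone_D by blast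
lemma cone_D6: "positive_cone G P \<Longrightarrow> \<one>\<^bsub>G\<^esub> \<notin> (\<lambda>x. inv\<^bsub>G\<^esub> x) ` P" using cone_D by blast

lemma (in group) cone_restrict:
  assumes "positive_cone G P" "subgroup H G"
  shows "positive_cone (G\<lparr>carrier := H\<rparr>) (P \<inter> H)"
proof -
  note P = cone_D1[OF assms(1)] cone_D2[OF assms(1)] cone_D3[OF assms(1)] cone_D4[OF assms(1)] cone_D5[OF assms(1)] cone_D6[OF assms(1)]
  have sub: "H \<subseteq> carrier G" using assms(2) subgroup.subset by blast
  have img: "(\<lambda>x. inv\<^bsub>G\<lparr>carrier := H\<rparr>\<^esub> x) ` (P \<inter> H) = (\<lambda>x. inv x) ` (P \<inter> H)"
    using assms(2) by (auto intro!: image_cong)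
  have hE: "H = (P \<inter> H) \<union> (\<lambda>x. inv x) ` (P \<inter> H) \<union> {\<one>}"
  proof (intro equalityI subsetI)
    fix x assume x: "x \<in> H"
    then have "x \<in> carrier G" using sub by blast
    then have "x \<in> P \<union> (\<lambda>x. inv x) ` P \<union> {\<one>}" by (subst P(3)[symmetric])
    then consider "x \<in> P" | "x \<in> (\<lambda>x. inv x) ` P" | "x = \<one>" by blast
    then show "x \<in> (P \<inter> H) \<union> (\<lambda>x. inv x) ` (P \<inter> H) \<union> {\<one>}"
    proof cases
      case 1
      then show ?thesis using x by blast
    next
      case 3
      then show ?thesis by blast
    next
      case 2
      then obtain p where p: "p \<in> P" "x = inv p" by blast
      then have "p = inv x" using P(1) by (simp add: subsetD)
      then have "p \<in> H" using x subgroup.m_inv_closed[OF assms(2)] by simp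
      then have "inv p \<in> (\<lambda>x. inv x) ` (P \<inter> H)" using p by blast
      then show ?thesis unfolding p(2) by blast
    qed
  next
    fix x assume "x \<in> (P \<inter> H) \<union> (\<lambda>x. inv x) ` (P \<inter> H) \<union> {\<one>}"
    then consider "x \<in> P \<inter> H" | "x \<in> (\<lambda>x. inv x) ` (P \<inter> H)" | "x = \<one>" by blast
    then show "x \<in> H"
    proof cases
      case 2
      then obtain p where "p \<in> H" "x = inv p" by blast
      then show ?thesis using subgroup.m_inv_closed[OF assms(2)] by simp
    qed (use subgroup.one_closed[OF assms(2)] in simp_all)
  qed
  have c1: "carrier (G\<lparr>carrier := H\<rparr>) = H" by simp
  have o1: "\<one>\<^bsub>G\<lparr>carrier := H\<rparr>\<^esub> = \<one>" by simp
  have eqH: "carrier (G\<lparr>carrier := H\<rparr>) = (P \<inter> H) \<union> (\<lambda>x. inv x) ` (P \<inter> H) \<union> {\<one>\<^bsub>G\<lparr>carrier := H\<rparr>\<^esub>}"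
    unfolding c1 o1 by (rule hE)
  show ?thesis unfolding positive_cone_def img
  proof (intro conjI)
    show "\<forall>x\<in>P \<inter> H. \<forall>y\<in>P \<inter> H. x \<otimes>\<^bsub>G\<lparr>carrier := H\<rparr>\<^esub> y \<in> P \<inter> H"
      using P(2) subgroup.m_closed[OF assms(2)] by auto
    show "P \<inter> H \<inter> (\<lambda>x. inv x) ` (P \<inter> H) = {}" using P(4) by blast
    show "\<one>\<^bsub>G\<lparr>carrier := H\<rparr>\<^esub> \<notin> P \<inter> H" using P(5) by simp
    show "\<one>\<^bsub>G\<lparr>carrier := H\<rparr>\<^esub> \<notin> (\<lambda>x. inv x) ` (P \<inter> H)" using P(6) by auto
    show "P \<inter> H \<subseteq> carrier (G\<lparr>carrier := H\<rparr>)" unfolding c1 by blast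
    show "carrier (G\<lparr>carrier := H\<rparr>) = P \<inter> H \<union> (\<lambda>x. inv x) ` (P \<inter> H) \<union> {\<one>\<^bsub>G\<lparr>carrier := H\<rparr>\<^esub>}" by (rule eqH)
  qed
qed

lemma (in group) cone_pow:
  assumes "positive_cone G P" "x \<in> P"
  shows "x [^] Suc k \<in> P"
proof (induction k)
  case 0
  have "x \<in> carrier G" using cone_D1[OF assms(1)] assms(2) by blast
  then show ?case using assms(2) by simp
next
  case (Suc k)
  have "x \<in> carrier G" using assms cone_D1 by auto
  then have "x [^] Suc (Suc k) = x [^] Suc k \<otimes> x" by simp
  then show ?case using Suc assms cone_D2 by metis
qed

lemma (in group) neg_rep:
  assumes "positive_cone G P" "subgroup H G" "finite (rcosets H)" "x \<in> carrier G" "H #> x \<noteq> H"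
  shows "\<exists>t \<in> H #> x. t \<in> (\<lambda>x. inv x) ` P"
proof -
  note P = cone_D1[OF assms(1)] cone_D2[OF assms(1)] cone_D3[OF assms(1)]
  have sub: "H \<subseteq> carrier G" using assms(2) subgroup.subset by blast
  have xin: "x \<in> H #> x" using rcos_self assms by blast
  have "x \<in> P \<union> (\<lambda>x. inv x) ` P \<union> {\<one>}" using assms(4) by (subst P(3)[symmetric])
  then consider "x \<in> (\<lambda>x. inv x) ` P" | "x = \<one>" | "x \<in> P" by blast
  then show ?thesis
  proof cases
    case 1 then show ?thesis using xin by blast
  next
    case 2 then have False using assms(5) coset_join2 assms(2) subgroup.one_closed by fastforce
    then show ?thesis ..
  next
    case 3
    have "range (\<lambda>k::nat. H #> x [^] k) \<subseteq> rcosets H"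
      using rcosetsI sub assms(4) by auto
    then have "finite (range (\<lambda>k::nat. H #> x [^] k))" using assms(3) finite_subset by blast
    then have "\<not> inj (\<lambda>k::nat. H #> x [^] k)" using finite_imageD by blast
    then obtain a b :: nat where ab: "a \<noteq> b" "H #> x [^] a = H #> x [^] b" unfolding inj_def by blast
    have "\<exists>a b :: nat. a < b \<and> H #> x [^] a = H #> x [^] b"
      using ab by (metis nat_neq_iff)
    then obtain a b :: nat where ab: "a < b" "H #> x [^] a = H #> x [^] b" by blast
    obtain m where m: "b = a + Suc m" using less_imp_Suc_add[OF ab(1)] by auto
    have xa: "x [^] a \<in> carrier G" using assms(4) by simp
    have "x [^] b \<in> H #> x [^] a" using ab(2) rcos_self assms(2,4) by simp
    then have "x [^] b \<otimes> inv (x [^] a) \<in> H" using subgroup.rcos_module_imp[OF assms(2) is_group xa] by blast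
    moreover have "x [^] b = x [^] Suc m \<otimes> x [^] a"
    proof -
      have "x [^] b = x [^] (Suc m + a)" using m by (metis add.commute)
      also have "\<dots> = x [^] Suc m \<otimes> x [^] a" by (rule nat_pow_mult[OF assms(4), symmetric])
      finally show ?thesis .
    qed
    ultimately have yH: "x [^] Suc m \<in> H" using assms(4) by (simp add: m_assoc)
    define y where "y = x [^] Suc m"
    have yP: "y \<in> P" using cone_pow assms(1) 3 y_def by blast
    have yc: "y \<in> carrier G" using assms(4) y_def by simp
    define h where "h = inv y \<otimes> inv y"
    have iy: "inv y \<in> H" using yH y_def subgroup.m_inv_closed[OF assms(2)] by simp
    have hH: "h \<in> H" unfolding h_def by (rule subgroup.m_closed[OF assms(2) iy iy])
    have z: "inv x \<otimes> y = x [^] m"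
      using assms(4) y_def nat_pow_Suc2[of x m] by (simp add: m_assoc[symmetric])
    have "inv (h \<otimes> x) = inv x \<otimes> y \<otimes> y"
      using yc assms(4) h_def by (simp add: inv_mult_group m_assoc)
    also have "\<dots> = x [^] m \<otimes> y" using z by simp
    finally have eq: "inv (h \<otimes> x) = x [^] m \<otimes> y" .
    have "x [^] m \<otimes> y \<in> P"
    proof (cases m)
      case 0 then show ?thesis using yP yc by simp
    next
      case (Suc k) then show ?thesis using cone_pow[OF assms(1) 3, of k] yP P(2) by simp
    qed
    moreover have hxc: "h \<otimes> x \<in> carrier G" using hH sub assms(4) by blast
    moreover have "h \<otimes> x = inv (inv (h \<otimes> x))" using hxc by simp
    ultimately have "h \<otimes> x \<in> (\<lambda>x. inv x) ` P" unfolding eq by (metis image_eqI)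
    moreover have "h \<otimes> x \<in> H #> x" using rcosI hH sub assms(4) by blast
    ultimately show ?thesis by blast
  qed
qed

lemma (in monoid) wprod_closed: "set xs \<subseteq> carrier G \<Longrightarrow> wprod G xs \<in> carrier G"
  unfolding wprod_def by (induction xs) auto

lemma (in group) sym_gen_from_fin_gen:
  assumes "fin_gen G"
  shows "\<exists>Xg. sym_gen_set G Xg"
proof -
  obtain Y0 where Y0: "finite Y0" "Y0 \<subseteq> carrier G" "generate G Y0 = carrier G"
    using assms unfolding fin_gen_def by blast
  define Xg where "Xg = Y0 \<union> (\<lambda>x. inv x) ` Y0"
  have fX: "finite Xg" using Y0(1) Xg_def by simp
  have sX: "Xg \<subseteq> carrier G" using Y0(2) Xg_def by auto
  have iX: "\<forall>x\<in>Xg. inv x \<in> Xg"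
  proof
    fix x assume "x \<in> Xg"
    then consider "x \<in> Y0" | "x \<in> (\<lambda>x. inv x) ` Y0" unfolding Xg_def by blast
    then show "inv x \<in> Xg"
    proof cases
      case 1 then show ?thesis unfolding Xg_def by blast
    next
      case 2
      then obtain y where y: "y \<in> Y0" "x = inv y" by blast
      then have "inv x = y" using Y0(2) by (simp add: subsetD)
      then show ?thesis using y(1) unfolding Xg_def by simp
    qed
  qed
  have "generate G Xg \<subseteq> carrier G" using generate_incl[OF sX] .
  moreover have "generate G Y0 \<subseteq> generate G Xg" by (rule mono_generate) (simp add: Xg_def)
  ultimately have "generate G Xg = carrier G" using Y0(3) by blast
  then show ?thesis using fX sX iX unfolding sym_gen_set_def by blast
qed

theorem lemma4p8:
  fixes G :: "('a, 'b) monoid_scheme" and H :: "'a set" and \<H> :: "'a set set"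
  assumes "group G" and "fin_gen G" and "left_orderable G"
    and "subgroup H G" and "finite (rcosets\<^bsub>G\<^esub> H)"
    and "\<forall>K\<in>\<H>. subgroup K (G\<lparr>carrier := H\<rparr>)"
    and "Hucha (G\<lparr>carrier := H\<rparr>) \<H>"
  shows "Hucha G \<H>"
proof -
  interpret G: group G by (rule assms(1))
  define GH where "GH = G\<lparr>carrier := H\<rparr>"
  have grpH: "group GH" unfolding GH_def using G.subgroup_imp_group[OF assms(4)] .
  have sub: "H \<subseteq> carrier G" using assms(4) subgroup.subset by blast
  have cGH: "carrier GH = H" unfolding GH_def by simp
  have mGH: "\<And>a b. a \<otimes>\<^bsub>GH\<^esub> b = a \<otimes>\<^bsub>G\<^esub> b" unfolding GH_def by simp
  have oGH: "\<one>\<^bsub>GH\<^esub> = \<one>\<^bsub>G\<^esub>" unfolding GH_def by simp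
  have iGH: "\<And>a. a \<in> H \<Longrightarrow> inv\<^bsub>GH\<^esub> a = inv\<^bsub>G\<^esub> a" unfolding GH_def using assms(4) by simp
  obtain YH where YH: "sym_gen_set GH YH"
     and swH: "\<And>Q K r. positive_cone GH Q \<Longrightarrow> K \<in> \<H> \<Longrightarrow> r > 0 \<Longrightarrow> \<exists>S. negative_swamp GH YH Q K r S"
    using assms(7) unfolding Hucha_def GH_def by blast
  obtain Xg where Xg: "sym_gen_set G Xg" using G.sym_gen_from_fin_gen[OF assms(2)] by blast
  have XG: "Xg \<subseteq> carrier G" using Xg unfolding sym_gen_set_def by blast
  have "\<exists>S. negative_swamp G Xg P K r S"
    if P: "positive_cone G P" and K: "K \<in> \<H>" and r: "r > 0" for P K and r :: real
  proof -
    have PH: "positive_cone GH (P \<inter> H)" unfolding GH_def using G.cone_restrict[OF P assms(4)] .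
    have KH: "K \<subseteq> H" using assms(6) K subgroup.subset by fastforce
    define rep :: "'a set \<Rightarrow> 'a" where
      "rep C = (if C = H then \<one>\<^bsub>G\<^esub> else SOME t. t \<in> C \<and> t \<in> (\<lambda>x. inv\<^bsub>G\<^esub> x) ` P)" for C
    have rep: "rep (H #>\<^bsub>G\<^esub> g) \<in> H #>\<^bsub>G\<^esub> g \<and> (rep (H #>\<^bsub>G\<^esub> g) = \<one>\<^bsub>G\<^esub> \<or> rep (H #>\<^bsub>G\<^esub> g) \<in> (\<lambda>x. inv\<^bsub>G\<^esub> x) ` P)"
      if g: "g \<in> carrier G" for g
    proof (cases "H #>\<^bsub>G\<^esub> g = H")
      case True
      then show ?thesis unfolding rep_def using subgroup.one_closed[OF assms(4)] by simp
    next
      case False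
      obtain t where "t \<in> H #>\<^bsub>G\<^esub> g \<and> t \<in> (\<lambda>x. inv\<^bsub>G\<^esub> x) ` P"
        using G.neg_rep[OF P assms(4) assms(5) g False] by blast
      then have "rep (H #>\<^bsub>G\<^esub> g) \<in> H #>\<^bsub>G\<^esub> g \<and> rep (H #>\<^bsub>G\<^esub> g) \<in> (\<lambda>x. inv\<^bsub>G\<^esub> x) ` P"
        unfolding rep_def using False by (simp only: if_False) (rule someI)
      then show ?thesis by blast
    qed
    have repc: "rep (H #>\<^bsub>G\<^esub> g) \<in> carrier G" if g: "g \<in> carrier G" for g
      using rep[OF g] G.r_coset_subset_G[OF sub g] by blast
    define proj where "proj g = g \<otimes>\<^bsub>G\<^esub> inv\<^bsub>G\<^esub> (rep (H #>\<^bsub>G\<^esub> g))" for g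
    have projH: "proj g \<in> H" if g: "g \<in> carrier G" for g
    proof -
      have "rep (H #>\<^bsub>G\<^esub> g) \<otimes>\<^bsub>G\<^esub> inv\<^bsub>G\<^esub> g \<in> H"
        using subgroup.rcos_module_imp[OF assms(4) assms(1) g] rep[OF g] by blast
      then have "inv\<^bsub>G\<^esub> (rep (H #>\<^bsub>G\<^esub> g) \<otimes>\<^bsub>G\<^esub> inv\<^bsub>G\<^esub> g) \<in> H"
        using subgroup.m_inv_closed[OF assms(4)] by blast
      moreover have "inv\<^bsub>G\<^esub> (rep (H #>\<^bsub>G\<^esub> g) \<otimes>\<^bsub>G\<^esub> inv\<^bsub>G\<^esub> g) = proj g"
        unfolding proj_def using g repc[OF g] by (simp add: G.inv_mult_group)
      ultimately show ?thesis by simp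
    qed
    have projeq: "g = proj g \<otimes>\<^bsub>G\<^esub> rep (H #>\<^bsub>G\<^esub> g)" if g: "g \<in> carrier G" for g
      unfolding proj_def using g repc[OF g] by (simp add: G.m_assoc)
    have projid: "proj g = g" if g: "g \<in> H" for g
    proof -
      have "H #>\<^bsub>G\<^esub> g = H" using subgroup.rcos_const[OF assms(4) assms(1) g] .
      then show ?thesis unfolding proj_def rep_def using g sub by auto
    qed
    define R where "R = (\<lambda>g. rep (H #>\<^bsub>G\<^esub> g)) ` carrier G"
    have "R \<subseteq> rep ` (rcosets\<^bsub>G\<^esub> H)" unfolding R_def RCOSETS_def by blast
    then have fR: "finite R" using assms(5) finite_subset by blast
    have RG: "R \<subseteq> carrier G" unfolding R_def using repc by blast
    define W where "W = wprod G ` {xs. set xs \<subseteq> Xg \<and> length xs \<le> nat \<lceil>r\<rceil>}"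
    have fW: "finite W" unfolding W_def
      using Xg finite_lists_length_le unfolding sym_gen_set_def by blast
    define F where "F = (\<lambda>(a, w, b). a \<otimes>\<^bsub>G\<^esub> w \<otimes>\<^bsub>G\<^esub> inv\<^bsub>G\<^esub> b) ` (R \<times> W \<times> R)"
    have fF: "finite F" unfolding F_def using fR fW by simp
    define r' where "r' = real (Max (wlen GH YH ` F)) + 1"
    have r'pos: "r' > 0" unfolding r'_def by simp
    have step: "real (word_dist GH YH (proj g) (proj g')) \<le> r'"
      if g: "g \<in> carrier G" and g': "g' \<in> carrier G" and d: "real (word_dist G Xg g g') \<le> r" for g g'
    proof -
      have e: "inv\<^bsub>G\<^esub> g \<otimes>\<^bsub>G\<^esub> g' \<in> carrier G" using g g' by simp
      obtain xs where xs: "length xs = wlen G Xg (inv\<^bsub>G\<^esub> g \<otimes>\<^bsub>G\<^esub> g')" "set xs \<subseteq> Xg"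
          "wprod G xs = inv\<^bsub>G\<^esub> g \<otimes>\<^bsub>G\<^esub> g'"
        using G.wlen_word[OF Xg e] by blast
      have "real (length xs) \<le> r" using d xs(1) unfolding word_dist_wlen by simp
      then have "length xs \<le> nat \<lceil>r\<rceil>" by linarith
      then have wW: "inv\<^bsub>G\<^esub> g \<otimes>\<^bsub>G\<^esub> g' \<in> W" unfolding W_def using xs by (auto intro!: image_eqI[where x=xs])
      have a: "rep (H #>\<^bsub>G\<^esub> g) \<in> R" "rep (H #>\<^bsub>G\<^esub> g') \<in> R" unfolding R_def using g g' by auto
      have "inv\<^bsub>G\<^esub> (proj g) \<otimes>\<^bsub>G\<^esub> proj g' =
          rep (H #>\<^bsub>G\<^esub> g) \<otimes>\<^bsub>G\<^esub> (inv\<^bsub>G\<^esub> g \<otimes>\<^bsub>G\<^esub> g') \<otimes>\<^bsub>G\<^esub> inv\<^bsub>G\<^esub> (rep (H #>\<^bsub>G\<^esub> g'))"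
        unfolding proj_def using g g' repc[OF g] repc[OF g'] by (simp add: G.inv_mult_group G.m_assoc)
      then have inF: "inv\<^bsub>G\<^esub> (proj g) \<otimes>\<^bsub>G\<^esub> proj g' \<in> F"
        unfolding F_def using a wW by (auto intro!: image_eqI[where x="(rep (H #>\<^bsub>G\<^esub> g), inv\<^bsub>G\<^esub> g \<otimes>\<^bsub>G\<^esub> g', rep (H #>\<^bsub>G\<^esub> g'))"])
      have "word_dist GH YH (proj g) (proj g') = wlen GH YH (inv\<^bsub>G\<^esub> (proj g) \<otimes>\<^bsub>G\<^esub> proj g')"
        unfolding word_dist_wlen using iGH[OF projH[OF g]] mGH by simp
      also have "\<dots> \<le> Max (wlen GH YH ` F)" using fF inF by simp
      finally show ?thesis unfolding r'_def by linarith
    qed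
    obtain S' where S': "negative_swamp GH YH (P \<inter> H) K r' S'" using swH[OF PH K r'pos] by blast
    define S where "S = (\<lambda>(h, t). h \<otimes>\<^bsub>G\<^esub> t) ` (S' \<times> R)"
    have pathmap: "r_path GH YH r' (map proj ps) \<and> (set (map proj ps) \<inter> S' \<noteq> {} \<longrightarrow> set ps \<inter> S \<noteq> {})"
      if ps: "r_path G Xg r ps" for ps
    proof -
      have ps1: "ps \<noteq> []" "set ps \<subseteq> carrier G"
        "\<And>i. Suc i < length ps \<Longrightarrow> real (word_dist G Xg (ps ! i) (ps ! Suc i)) \<le> r"
        using ps unfolding r_path_def by auto
      have "r_path GH YH r' (map proj ps)" unfolding r_path_def
      proof (intro conjI allI impI)
        show "map proj ps \<noteq> []" using ps1 by simp
        show "set (map proj ps) \<subseteq> carrier GH" using ps1 projH cGH by auto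
        fix i assume i: "Suc i < length (map proj ps)"
        have "ps ! i \<in> carrier G" "ps ! Suc i \<in> carrier G" using i ps1(2) by auto
        then show "real (word_dist GH YH (map proj ps ! i) (map proj ps ! Suc i)) \<le> r'"
          using step ps1(3) i by auto
      qed
      moreover have "set ps \<inter> S \<noteq> {}" if neS: "set (map proj ps) \<inter> S' \<noteq> {}"
      proof -
        obtain y where y: "y \<in> set (map proj ps)" "y \<in> S'" using neS by blast
        then obtain g where g0: "g \<in> set ps" "y = proj g" by auto
        then have g: "g \<in> set ps" "proj g \<in> S'" using y(2) by auto
        have gc: "g \<in> carrier G" using g ps1 by auto
        have "rep (H #>\<^bsub>G\<^esub> g) \<in> R" unfolding R_def using gc by auto
        then have "proj g \<otimes>\<^bsub>G\<^esub> rep (H #>\<^bsub>G\<^esub> g) \<in> S" unfolding S_def using g(2) by auto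
        then have "g \<in> S" using projeq[OF gc] by simp
        then show ?thesis using g(1) by blast
      qed
      ultimately show ?thesis by blast
    qed
    have transfer: "r_disconnects G Xg r S A B"
      if A: "A \<subseteq> H" and B: "B \<subseteq> H" and d: "r_disconnects GH YH r' S' A B" for A B
      unfolding r_disconnects_def
    proof (intro allI impI)
      fix ps assume h: "r_path G Xg r ps \<and> hd ps \<in> A \<and> last ps \<in> B"
      then have pm: "r_path GH YH r' (map proj ps)" "set (map proj ps) \<inter> S' \<noteq> {} \<longrightarrow> set ps \<inter> S \<noteq> {}"
        using pathmap by blast+
      have ne: "ps \<noteq> []" using h unfolding r_path_def by blast
      have "hd (map proj ps) = hd ps" using ne h A projid by (auto simp: hd_map)
      moreover have "last (map proj ps) = last ps" using ne h B projid by (auto simp: last_map)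
      ultimately have "set (map proj ps) \<inter> S' \<noteq> {}" using d pm(1) h unfolding r_disconnects_def by metis
      then show "set ps \<inter> S \<noteq> {}" using pm(2) by blast
    qed
    have S'1: "S' \<subseteq> (\<lambda>x. inv\<^bsub>GH\<^esub> x) ` (P \<inter> H)" and S'2: "r_disconnects_set GH YH r' S' (P \<inter> H)"
      and S'3: "\<exists>g1\<in>carrier GH. \<exists>g2\<in>carrier GH. r_disconnects GH YH r' S' (g1 <#\<^bsub>GH\<^esub> K) (g2 <#\<^bsub>GH\<^esub> K)"
      using S' unfolding negative_swamp_def by blast+
    have "S \<subseteq> (\<lambda>x. inv\<^bsub>G\<^esub> x) ` P"
    proof
      fix s assume "s \<in> S"
      then obtain h t where ht: "h \<in> S'" "t \<in> R" "s = h \<otimes>\<^bsub>G\<^esub> t" unfolding S_def by auto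
      obtain p where p: "p \<in> P \<inter> H" "h = inv\<^bsub>G\<^esub> p" using ht(1) S'1 iGH by force
      have pc: "p \<in> carrier G" using p sub by blast
      obtain g where g: "g \<in> carrier G" "t = rep (H #>\<^bsub>G\<^esub> g)" using ht(2) unfolding R_def by blast
      consider "t = \<one>\<^bsub>G\<^esub>" | "t \<in> (\<lambda>x. inv\<^bsub>G\<^esub> x) ` P" using rep[OF g(1)] g(2) by blast
      then show "s \<in> (\<lambda>x. inv\<^bsub>G\<^esub> x) ` P"
      proof cases
        case 1
        then have "s = inv\<^bsub>G\<^esub> p" using ht(3) p(2) pc by simp
        then show ?thesis using p(1) by blast
      next
        case 2
        then obtain q where q: "q \<in> P" "t = inv\<^bsub>G\<^esub> q" by blast
        have qc: "q \<in> carrier G" using q(1) cone_D1[OF P] by blast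
        have "s = inv\<^bsub>G\<^esub> (q \<otimes>\<^bsub>G\<^esub> p)" using ht(3) p(2) q(2) pc qc by (simp add: G.inv_mult_group)
        moreover have "q \<otimes>\<^bsub>G\<^esub> p \<in> P" using cone_D2[OF P q(1)] p(1) by blast
        ultimately show ?thesis by blast
      qed
    qed
    moreover have "r_disconnects_set G Xg r S P"
    proof -
      obtain u v where uv: "u \<in> P \<inter> H" "v \<in> P \<inter> H" "r_disconnects GH YH r' S' {u} {v}"
        using S'2 unfolding r_disconnects_set_def by blast
      then have "r_disconnects G Xg r S {u} {v}" using transfer[of "{u}" "{v}"] by blast
      then show ?thesis unfolding r_disconnects_set_def using uv by blast
    qed
    moreover have "\<exists>g1\<in>carrier G. \<exists>g2\<in>carrier G. r_disconnects G Xg r S (g1 <#\<^bsub>G\<^esub> K) (g2 <#\<^bsub>G\<^esub> K)"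
    proof -
      obtain g1 g2 where gg: "g1 \<in> H" "g2 \<in> H" "r_disconnects GH YH r' S' (g1 <#\<^bsub>GH\<^esub> K) (g2 <#\<^bsub>GH\<^esub> K)"
        using S'3 cGH by blast
      have lc: "\<And>a. a <#\<^bsub>GH\<^esub> K = a <#\<^bsub>G\<^esub> K" unfolding l_coset_def mGH by simp
      have "\<And>a. a \<in> H \<Longrightarrow> a <#\<^bsub>G\<^esub> K \<subseteq> H"
        unfolding l_coset_def using KH subgroup.m_closed[OF assms(4)] by blast
      then have "r_disconnects G Xg r S (g1 <#\<^bsub>G\<^esub> K) (g2 <#\<^bsub>G\<^esub> K)"
        using transfer gg lc by simp
      then show ?thesis using gg(1,2) sub by blast
    qed
    ultimately show ?thesis unfolding negative_swamp_def by blast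
  qed
  then show ?thesis unfolding Hucha_def using assms(1,2,3) Xg by blast
qed

end
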